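(* Let $\Omega\subseteq\mathbb{F}$ be a P-closed set with finite P-basis $\mathcal{B}$, $n=\mathrm{Rk}(\Omega)$. For any $F\in\mathbb{F}[x;\sigma,\delta]_n$, $$\mathrm{wt}_\Omega(F)=\min\{\mathrm{wt_H}(E_\mathcal{A}(F)) : \mathcal{A}\text{ is a P-basis of }\Omega\}\le \mathrm{wt_H}(E_\mathcal{B}(F)),$$ equivalently, for $f\in\mathbb{F}^\mathcal{B}$, $\mathrm{wt}_\mathcal{B}(f)=\min\{\mathrm{wt_H}(\pi_{\mathcal{B},\mathcal{A}}(f)):\mathcal{A}\text{ a P-basis of }\Omega\}\le\mathrm{wt_H}(f)$.
   Context: $\mathbb{F}$ is a division ring, $\sigma$ a ring endomorphism of $\mathbb{F}$, $\delta$ a $\sigma$-derivation ($\delta$ additive, $\delta(ab)=\sigma(a)\delta(b)+\delta(a)b$). $\mathbb{F}[x;\sigma,\delta]$ is the skew polynomial ring (left $\mathbb{F}$-space with basis $x^i$, $xa=\sigma(a)x+\delta(a)$); $\mathbb{F}[x;\sigma,\delta]_n$ are those of degree $<n$. Evaluation: $F(a)$ is the unique element with $F-F(a)\in\mathbb{F}[x;\sigma,\delta](x-a)$; $E_\Omega(F)\in\mathbb{F}^\Omega$ is $a\mapsto F(a)$. $Z(A)$ is the set of common zeros of $A$, $I(\Omega)$ the left ideal of polynomials vanishing on $\Omega$, generated by its monic minimal-degree element $F_\Omega$; $\overline{\Omega}=Z(I(\Omega))$ is the P-closure, $\Omega$ is P-closed if $\overline\Omega=\Omega$, P-independent if no $a\in\Omega$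 lies in $\overline{\Omega\setminus\{a\}}$; a P-basis of a P-closed $\Omega$ is a P-independent generating subset. $\mathrm{Rk}(\Omega)=\deg F_\Omega$ equals the size of any P-basis. For a P-basis $\mathcal{B}$ with $n$ elements, $E_\mathcal{B}:\mathbb{F}[x;\sigma,\delta]_n\to\mathbb{F}^\mathcal{B}$ is bijective. Skew weight: $\mathrm{wt}_\Omega(F)=n-\mathrm{Rk}(Z(F)\cap\Omega)$ for $\deg F<n$, and $\mathrm{wt}_\mathcal{B}(E_\mathcal{B}(F))=\mathrm{wt}_\Omega(F)$. $\pi_{\mathcal{B},\mathcal{A}}(E_\mathcal{B}(F))=E_\mathcal{A}(F)$. For $f\in\mathbb{F}^\mathcal{A}$, the Hamming weight is $\mathrm{wt_H}(f)=\#\{a\in\mathcal{A}: f(a)\ne0\}$. *)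

theory Defs
  imports "HOL-Computational_Algebra.Polynomial"
begin

text \<open>Skew polynomials over a division ring 'a, represented by their coefficient
  sequences (left coefficients: F = sum f_i x^i), with skew multiplication
  determined by x a = sigma(a) x + delta(a).\<close>

definition ring_endo :: "('a::division_ring \<Rightarrow> 'a) \<Rightarrow> bool" where
  "ring_endo \<sigma> \<longleftrightarrow> (\<forall>a b. \<sigma> (a + b) = \<sigma> a + \<sigma> b) \<and>
     (\<forall>a b. \<sigma> (a * b) = \<sigma> a * \<sigma> b) \<and> \<sigma> 1 = 1"

definition sigma_derivation :: "('a::division_ring \<Rightarrow> 'a) \<Rightarrow> ('a \<Rightarrow> 'a) \<Rightarrow> bool" where
  "sigma_derivation \<sigma> \<delta> \<longleftrightarrow> (\<forall>a b. \<delta> (a + b) = \<delta> a + \<delta> b) \<and>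
     (\<forall>a b. \<delta> (a * b) = \<sigma> a * \<delta> b + \<delta> a * b)"

text \<open>Left multiplication by x: x (sum h_i x^i) = sum (sigma(h_i) x^(i+1) + delta(h_i) x^i).\<close>
definition skew_xmul :: "('a::division_ring \<Rightarrow> 'a) \<Rightarrow> ('a \<Rightarrow> 'a) \<Rightarrow> 'a poly \<Rightarrow> 'a poly" where
  "skew_xmul \<sigma> \<delta> H = pCons 0 (map_poly \<sigma> H) + map_poly \<delta> H"

definition lscale :: "'a::division_ring \<Rightarrow> 'a poly \<Rightarrow> 'a poly" where
  "lscale a H = map_poly (\<lambda>c. a * c) H"

definition skew_mult :: "('a::division_ring \<Rightarrow> 'a) \<Rightarrow> ('a \<Rightarrow> 'a) \<Rightarrow> 'a poly \<Rightarrow> 'a poly \<Rightarrow> 'a poly" where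
  "skew_mult \<sigma> \<delta> F G = (\<Sum>i\<le>degree F. lscale (coeff F i) ((skew_xmul \<sigma> \<delta> ^^ i) G))"

definition skew_eval :: "('a::division_ring \<Rightarrow> 'a) \<Rightarrow> ('a \<Rightarrow> 'a) \<Rightarrow> 'a poly \<Rightarrow> 'a \<Rightarrow> 'a" where
  "skew_eval \<sigma> \<delta> F a = (THE b. \<exists>G. F - [:b:] = skew_mult \<sigma> \<delta> G [:- a, 1:])"

definition skew_polys_lt :: "nat \<Rightarrow> 'a::division_ring poly set" where
  "skew_polys_lt n = {F. \<forall>i\<ge>n. coeff F i = 0}"

definition zeros_of :: "('a::division_ring \<Rightarrow> 'a) \<Rightarrow> ('a \<Rightarrow> 'a) \<Rightarrow> 'a poly set \<Rightarrow> 'a set" where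
  "zeros_of \<sigma> \<delta> A = {a. \<forall>F\<in>A. skew_eval \<sigma> \<delta> F a = 0}"

definition vanishing_ideal :: "('a::division_ring \<Rightarrow> 'a) \<Rightarrow> ('a \<Rightarrow> 'a) \<Rightarrow> 'a set \<Rightarrow> 'a poly set" where
  "vanishing_ideal \<sigma> \<delta> \<Omega> = {F. \<forall>a\<in>\<Omega>. skew_eval \<sigma> \<delta> F a = 0}"

definition P_closure :: "('a::division_ring \<Rightarrow> 'a) \<Rightarrow> ('a \<Rightarrow> 'a) \<Rightarrow> 'a set \<Rightarrow> 'a set" where
  "P_closure \<sigma> \<delta> \<Omega> = zeros_of \<sigma> \<delta> (vanishing_ideal \<sigma> \<delta> \<Omega>)"

definition P_closed :: "('a::division_ring \<Rightarrow> 'a) \<Rightarrow> ('a \<Rightarrow> 'a) \<Rightarrow> 'a set \<Rightarrow> bool" where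
  "P_closed \<sigma> \<delta> \<Omega> \<longleftrightarrow> P_closure \<sigma> \<delta> \<Omega> = \<Omega>"

definition P_independent :: "('a::division_ring \<Rightarrow> 'a) \<Rightarrow> ('a \<Rightarrow> 'a) \<Rightarrow> 'a set \<Rightarrow> bool" where
  "P_independent \<sigma> \<delta> \<Omega> \<longleftrightarrow> (\<forall>a\<in>\<Omega>. a \<notin> P_closure \<sigma> \<delta> (\<Omega> - {a}))"

definition P_basis :: "('a::division_ring \<Rightarrow> 'a) \<Rightarrow> ('a \<Rightarrow> 'a) \<Rightarrow> 'a set \<Rightarrow> 'a set \<Rightarrow> bool" where
  "P_basis \<sigma> \<delta> B \<Omega> \<longleftrightarrow> B \<subseteq> \<Omega> \<and> P_independent \<sigma> \<delta> B \<and> P_closure \<sigma> \<delta> B = \<Omega>"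

text \<open>Rk(Omega) = degree of the monic minimal-degree element F_Omega of I(Omega),
  i.e. the least degree of a nonzero polynomial vanishing on Omega.\<close>
definition P_rank :: "('a::division_ring \<Rightarrow> 'a) \<Rightarrow> ('a \<Rightarrow> 'a) \<Rightarrow> 'a set \<Rightarrow> nat" where
  "P_rank \<sigma> \<delta> \<Omega> = (LEAST d. \<exists>F\<in>vanishing_ideal \<sigma> \<delta> \<Omega>. F \<noteq> 0 \<and> degree F = d)"

definition skew_weight :: "('a::division_ring \<Rightarrow> 'a) \<Rightarrow> ('a \<Rightarrow> 'a) \<Rightarrow> 'a set \<Rightarrow> 'a poly \<Rightarrow> nat" where
  "skew_weight \<sigma> \<delta> \<Omega> F = P_rank \<sigma> \<delta> \<Omega> - P_rank \<sigma> \<delta> (zeros_of \<sigma> \<delta> {F} \<inter> \<Omega>)"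

definition hamming_eval :: "('a::division_ring \<Rightarrow> 'a) \<Rightarrow> ('a \<Rightarrow> 'a) \<Rightarrow> 'a set \<Rightarrow> 'a poly \<Rightarrow> nat" where
  "hamming_eval \<sigma> \<delta> A F = card {a\<in>A. skew_eval \<sigma> \<delta> F a \<noteq> 0}"

end

theory Submission
  imports Defs
begin

context
  fixes \<sigma> \<delta> :: "'a::division_ring \<Rightarrow> 'a"
  assumes endo: "ring_endo \<sigma>" and der: "sigma_derivation \<sigma> \<delta>"
begin

lemma sig_add: "\<sigma> (a + b) = \<sigma> a + \<sigma> b" using endo by (simp add: ring_endo_def)
lemma sig_mult: "\<sigma> (a * b) = \<sigma> a * \<sigma> b" using endo by (simp add: ring_endo_def)
lemma sig_1: "\<sigma> 1 = 1" using endo by (simp add: ring_endo_def)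
lemma sig_0: "\<sigma> 0 = 0" using sig_add[of 0 0] by simp
lemma del_add: "\<delta> (a + b) = \<delta> a + \<delta> b" using der by (simp add: sigma_derivation_def)
lemma del_mult: "\<delta> (a * b) = \<sigma> a * \<delta> b + \<delta> a * b" using der by (simp add: sigma_derivation_def)
lemma del_0: "\<delta> 0 = 0" using del_add[of 0 0] by simp

lemma sig_nz: "a \<noteq> 0 \<Longrightarrow> \<sigma> a \<noteq> 0"
proof
  assume a: "a \<noteq> 0" "\<sigma> a = 0"
  have "\<sigma> (a * inverse a) = 1" using a by (simp add: sig_1)
  then have "\<sigma> a * \<sigma> (inverse a) = 1" by (simp add: sig_mult)
  then show False using a by simp
qed

lemma sigpow_nz: "a \<noteq> 0 \<Longrightarrow> (\<sigma>^^k) a \<noteq> 0"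
  by (induction k) (auto simp: sig_nz)

lemma sigpow_1: "(\<sigma>^^k) 1 = 1"
  by (induction k) (auto simp: sig_1)

abbreviation X where "X \<equiv> skew_xmul \<sigma> \<delta>"

lemma coeff_lscale: "coeff (lscale c H) i = c * coeff H i"
  unfolding lscale_def by (simp add: coeff_map_poly)

lemma coeff_X: "coeff (X H) i = (if i = 0 then 0 else \<sigma> (coeff H (i - 1))) + \<delta> (coeff H i)"
  unfolding skew_xmul_def by (cases i) (auto simp: coeff_map_poly sig_0 del_0)

lemma lscale_add: "lscale c (A + B) = lscale c A + lscale c B"
  by (simp add: poly_eq_iff coeff_lscale algebra_simps)
lemma lscale_diff: "lscale c (A - B) = lscale c A - lscale c B"
  by (simp add: poly_eq_iff coeff_lscale algebra_simps)
lemma lscale_add_left: "lscale (a + b) A = lscale a A + lscale b A"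
  by (simp add: poly_eq_iff coeff_lscale algebra_simps)
lemma lscale_0_left[simp]: "lscale 0 A = 0"
  by (simp add: poly_eq_iff coeff_lscale)
lemma lscale_0_right[simp]: "lscale c 0 = 0"
  by (simp add: poly_eq_iff coeff_lscale)
lemma lscale_lscale: "lscale c (lscale d A) = lscale (c * d) A"
  by (simp add: poly_eq_iff coeff_lscale algebra_simps)
lemma lscale_const: "lscale c [:b:] = [:c * b:]"
  by (simp add: poly_eq_iff coeff_lscale coeff_pCons split: nat.split)

lemma lscale_sum: "lscale c (\<Sum>i<(N::nat). f i) = (\<Sum>i<N. lscale c (f i))"
  by (induction N) (auto simp: lscale_add)

lemma X_add: "X (A + B) = X A + X B"
  by (simp add: poly_eq_iff coeff_X sig_add del_add algebra_simps)
lemma X_0[simp]: "X 0 = 0"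
  by (simp add: poly_eq_iff coeff_X sig_0 del_0)
lemma X_sum: "X (\<Sum>i<(N::nat). f i) = (\<Sum>i<N. X (f i))"
  by (induction N) (auto simp: X_add)
lemma X_lscale: "X (lscale c H) = lscale (\<sigma> c) (X H) + lscale (\<delta> c) H"
  by (simp add: poly_eq_iff coeff_X coeff_lscale sig_mult del_mult algebra_simps)
lemma X_diff: "X (A - B) = X A - X B"
  using X_add[of "A - B" B] by simp

abbreviation V where "V \<equiv> skew_polys_lt"

lemma V_iff: "H \<in> V (Suc k) \<longleftrightarrow> degree H \<le> k"
  unfolding skew_polys_lt_def mem_Collect_eq
proof
  assume "\<forall>i\<ge>Suc k. coeff H i = 0"
  then show "degree H \<le> k" by (intro degree_le) auto
next
  assume "degree H \<le> k"
  then show "\<forall>i\<ge>Suc k. coeff H i = 0" by (auto intro: coeff_eq_0)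
qed

lemma V_deg: "H \<in> V (Suc (degree H))"
  using V_iff by blast

lemma X_V: "H \<in> V (Suc m) \<Longrightarrow> X H \<in> V (Suc (Suc m)) \<and> coeff (X H) (Suc m) = \<sigma> (coeff H m)"
  unfolding skew_polys_lt_def by (auto simp: coeff_X del_0 sig_0)

lemma Xpow_V: "H \<in> V (Suc m) \<Longrightarrow> (X^^k) H \<in> V (Suc (m + k)) \<and> coeff ((X^^k) H) (m + k) = (\<sigma>^^k) (coeff H m)"
proof (induction k)
  case 0 then show ?case by simp
next
  case (Suc k)
  then show ?case using X_V[of "(X^^k) H" "m + k"] by simp
qed


abbreviation SM where "SM \<equiv> skew_mult \<sigma> \<delta>"

lemma SM_sum: assumes "degree G < N"
  shows "SM G H = (\<Sum>i<N. lscale (coeff G i) ((X^^i) H))"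
proof -
  have "\<And>k. (\<Sum>i<Suc (degree G) + k. lscale (coeff G i) ((X^^i) H))
      = (\<Sum>i<Suc (degree G). lscale (coeff G i) ((X^^i) H))"
  proof -
    fix k show "(\<Sum>i<Suc (degree G) + k. lscale (coeff G i) ((X^^i) H))
      = (\<Sum>i<Suc (degree G). lscale (coeff G i) ((X^^i) H))"
      by (induction k) (auto simp: coeff_eq_0)
  qed
  from this[of "N - Suc (degree G)"] assms show ?thesis
    unfolding skew_mult_def by (simp add: lessThan_Suc_atMost[symmetric])
qed

lemma SM_add: "SM ((G1::'a poly) + G2) H = SM G1 H + SM G2 H"
proof -
  define N where "N = Suc (max (degree G1) (degree G2))"
  have d: "degree (G1 + G2) < N" "degree G1 < N" "degree G2 < N"
    using degree_add_le_max[of G1 G2] by (auto simp: N_def)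
  show ?thesis using d by (simp add: SM_sum[of _ N] lscale_add_left sum.distrib)
qed

lemma SM_0[simp]: "SM 0 H = 0"
  by (simp add: skew_mult_def)

lemma SM_diff: "SM (G1 - G2) H = SM G1 H - SM G2 H"
  using SM_add[of "G1 - G2" G2 H] by simp

lemma degree_lscale: "degree (lscale c G) \<le> degree G"
  by (rule degree_le) (simp add: coeff_lscale coeff_eq_0)

lemma SM_lscale: "SM (lscale c G) H = lscale c (SM G H)"
proof -
  have d: "degree (lscale c G) < Suc (degree G)" using degree_lscale[of c G] by simp
  show ?thesis
    unfolding SM_sum[OF d] SM_sum[of G "Suc (degree G)", OF lessI] lscale_sum lscale_lscale coeff_lscale ..
qed

lemma SM_monom: "SM (monom c k) H = lscale c ((X^^k) H)"
proof -
  have d: "degree (monom c k) < Suc k" by (simp add: degree_monom_le le_imp_less_Suc)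
  have "(\<Sum>i<Suc k. lscale (coeff (monom c k) i) ((X^^i) H)) = lscale c ((X^^k) H)"
    by (simp add: coeff_monom)
  then show ?thesis by (simp add: SM_sum[OF d])
qed

lemma SM_X: "X (SM G H) = SM (X G) H"
proof -
  define N where "N = Suc (degree G)"
  have d1: "degree G < N" by (simp add: N_def)
  have "X G \<in> V (Suc N)" using X_V[OF V_deg[of G]] by (simp add: N_def)
  then have d2: "degree (X G) < Suc N" using V_iff[of "X G" N] by simp
  have "SM (X G) H = (\<Sum>j<Suc N. lscale ((if j = 0 then 0 else \<sigma> (coeff G (j - 1))) + \<delta> (coeff G j)) ((X^^j) H))"
    by (simp add: SM_sum[OF d2] coeff_X)
  also have "\<dots> = (\<Sum>j<Suc N. lscale (if j = 0 then 0 else \<sigma> (coeff G (j - 1))) ((X^^j) H))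
      + (\<Sum>j<Suc N. lscale (\<delta> (coeff G j)) ((X^^j) H))"
    by (simp add: lscale_add_left sum.distrib)
  also have "(\<Sum>j<Suc N. lscale (if j = 0 then 0 else \<sigma> (coeff G (j - 1))) ((X^^j) H))
      = (\<Sum>i<N. lscale (\<sigma> (coeff G i)) (X ((X^^i) H)))"
    by (subst sum.lessThan_Suc_shift) simp
  also have "(\<Sum>j<Suc N. lscale (\<delta> (coeff G j)) ((X^^j) H)) = (\<Sum>j<N. lscale (\<delta> (coeff G j)) ((X^^j) H))"
    using d1 by (simp add: coeff_eq_0 del_0)
  finally have "SM (X G) H = (\<Sum>i<N. lscale (\<sigma> (coeff G i)) (X ((X^^i) H)) + lscale (\<delta> (coeff G i)) ((X^^i) H))"
    by (simp add: sum.distrib)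
  moreover have "X (SM G H) = (\<Sum>i<N. lscale (\<sigma> (coeff G i)) (X ((X^^i) H)) + lscale (\<delta> (coeff G i)) ((X^^i) H))"
    by (simp add: SM_sum[OF d1] X_sum X_lscale)
  ultimately show ?thesis by simp
qed


lemma grp_l1: "(a::'b::ab_group_add) + c = b + d \<Longrightarrow> d - c = a - b"
  by (metis add_diff_cancel_left' diff_diff_eq2 eq_diff_eq)
lemma grp_l2: "(a::'b::ab_group_add) - b = s \<Longrightarrow> c - d = t \<Longrightarrow> (a + c) - (b + d) = s + t"
  by (metis diff_diff_eq add.commute diff_add_eq)

abbreviation ev where "ev \<equiv> skew_eval \<sigma> \<delta>"

lemma L_V: "(X^^k) [:- a, 1:] \<in> V (Suc (Suc k)) \<and> coeff ((X^^k) [:- a, 1:]) (Suc k) = 1"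
proof -
  have "[:- a, 1:] \<in> V (Suc 1)" by (simp add: V_iff)
  from Xpow_V[OF this, of k] show ?thesis by (simp add: sigpow_1)
qed

lemma V_mono: "H \<in> V m \<Longrightarrow> m \<le> k \<Longrightarrow> H \<in> V k"
  unfolding skew_polys_lt_def by auto

lemma SM_L_top: assumes "G \<in> V (Suc m)"
  shows "SM G [:- a, 1:] \<in> V (Suc (Suc m)) \<and> coeff (SM G [:- a, 1:]) (Suc m) = coeff G m"
proof -
  have d: "degree G < Suc m" using assms V_iff[of G m] by simp
  have e: "SM G [:- a, 1:] = (\<Sum>i<Suc m. lscale (coeff G i) ((X^^i) [:- a, 1:]))"
    by (rule SM_sum[OF d])
  have c: "coeff (SM G [:- a, 1:]) j = (\<Sum>i<Suc m. coeff G i * coeff ((X^^i) [:- a, 1:]) j)" for j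
    unfolding e coeff_sum coeff_lscale ..
  have z: "coeff ((X^^i) [:- a, 1:]) j = 0" if "Suc i \<le> j - 1" "j > 0" for i j
  proof -
    have "(X^^i) [:- a, 1:] \<in> V (Suc (Suc i))" using L_V by blast
    then show ?thesis using that unfolding skew_polys_lt_def by auto
  qed
  have "coeff (SM G [:- a, 1:]) j = 0" if "j \<ge> Suc (Suc m)" for j
    unfolding c using that by (intro sum.neutral) (auto intro!: z)
  moreover have "coeff (SM G [:- a, 1:]) (Suc m) = coeff G m"
  proof -
    have "(\<Sum>i<m. coeff G i * coeff ((X^^i) [:- a, 1:]) (Suc m)) = 0"
    proof (intro sum.neutral ballI)
      fix i assume "i \<in> {..<m}"
      then have "(X^^i) [:- a, 1:] \<in> V (Suc (Suc i))" "Suc (Suc i) \<le> Suc m" using L_V by auto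
      then show "coeff G i * coeff ((X^^i) [:- a, 1:]) (Suc m) = 0"
        unfolding skew_polys_lt_def by auto
    qed
    then show ?thesis unfolding c using L_V[of m a] by simp
  qed
  ultimately show ?thesis unfolding skew_polys_lt_def by auto
qed

lemma SM_L_const: assumes "SM G [:- a, 1:] = [:c:]" shows "G = 0" "c = 0"
proof -
  show "G = 0"
  proof (rule ccontr)
    assume "G \<noteq> 0"
    have "coeff (SM G [:- a, 1:]) (Suc (degree G)) = lead_coeff G"
      using SM_L_top[OF V_deg[of G]] by simp
    then show False using assms \<open>G \<noteq> 0\<close> by simp
  qed
  then show "c = 0" using assms by simp
qed

lemma div_ex: "\<exists>b G. F - [:b:] = SM G [:- a, 1:]"
proof -
  have "\<forall>F. F \<in> V (Suc N) \<longrightarrow> (\<exists>b G. F - [:b:] = SM G [:- a, 1:])" for N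
  proof (induction N)
    case 0
    show ?case
    proof (intro allI impI)
      fix F :: "'a poly" assume "F \<in> V (Suc 0)"
      then have "F = [:coeff F 0:]"
        unfolding skew_polys_lt_def by (auto simp: poly_eq_iff coeff_pCons split: nat.split)
      then have "F - [:coeff F 0:] = SM 0 [:- a, 1:]" by simp
      then show "\<exists>b G. F - [:b:] = SM G [:- a, 1:]" by blast
    qed
  next
    case (Suc N)
    show ?case
    proof (intro allI impI)
      fix F :: "'a poly" assume F: "F \<in> V (Suc (Suc N))"
      define f where "f = coeff F (Suc N)"
      define F' where "F' = F - lscale f ((X^^N) [:- a, 1:])"
      have "F' \<in> V (Suc N)"
      proof -
        have "coeff F' i = 0" if "i \<ge> Suc N" for i
        proof (cases "i = Suc N")
          case True then show ?thesis using L_V[of N a] by (simp add: F'_def f_def coeff_lscale)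
        next
          case False then have "i \<ge> Suc (Suc N)" using that by simp
          then show ?thesis using F L_V[of N a] unfolding skew_polys_lt_def
            by (simp add: F'_def coeff_lscale)
        qed
        then show ?thesis unfolding skew_polys_lt_def by simp
      qed
      with Suc obtain b G where "F' - [:b:] = SM G [:- a, 1:]" by blast
      then have "F - [:b:] = SM G [:- a, 1:] + SM (monom f N) [:- a, 1:]"
        unfolding F'_def SM_monom by (simp add: algebra_simps)
      then have "F - [:b:] = SM (G + monom f N) [:- a, 1:]" by (simp add: SM_add)
      then show "\<exists>b G. F - [:b:] = SM G [:- a, 1:]" by blast
    qed
  qed
  then show ?thesis using V_deg by blast
qed

lemma ev_eq: assumes "F - [:b:] = SM G [:- a, 1:]" shows "ev F a = b"
  unfolding skew_eval_def
proof (rule the_equality)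
  show "\<exists>G. F - [:b:] = SM G [:- a, 1:]" using assms by blast
next
  fix b' assume "\<exists>G. F - [:b':] = SM G [:- a, 1:]"
  then obtain G' where G': "F - [:b':] = SM G' [:- a, 1:]" by blast
  have "[:b:] + SM G [:- a, 1:] = [:b':] + SM G' [:- a, 1:]"
    using assms G' by (metis add.commute diff_add_cancel)
  from grp_l1[OF this] have "SM (G' - G) [:- a, 1:] = [:b - b':]"
    by (simp add: SM_diff)
  then show "b' = b" using SM_L_const(2) by fastforce
qed

lemma ev_ex: "\<exists>G. F - [:ev F a:] = SM G [:- a, 1:]"
  using div_ex[of F a] ev_eq by metis

lemma ev_const[simp]: "ev [:b:] a = b"
  by (rule ev_eq[of _ _ 0]) simp

lemma ev_zero[simp]: "ev 0 a = 0"
  using ev_const[of 0 a] by simp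

lemma ev_add: "ev (F1 + F2) a = ev F1 a + ev F2 a"
proof -
  obtain G1 G2 where "F1 - [:ev F1 a:] = SM G1 [:- a, 1:]" "F2 - [:ev F2 a:] = SM G2 [:- a, 1:]"
    using ev_ex by blast
  from grp_l2[OF this] have "(F1 + F2) - [:ev F1 a + ev F2 a:] = SM (G1 + G2) [:- a, 1:]"
    by (simp add: SM_add)
  then show ?thesis by (rule ev_eq)
qed

lemma ev_diff: "ev (F1 - F2) a = ev F1 a - ev F2 a"
  using ev_add[of "F1 - F2" F2 a] by (simp add: algebra_simps)

lemma ev_lscale: "ev (lscale c F) a = c * ev F a"
proof -
  obtain G where "F - [:ev F a:] = SM G [:- a, 1:]" using ev_ex by blast
  then have "lscale c F - [:c * ev F a:] = SM (lscale c G) [:- a, 1:]"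
    by (simp add: SM_lscale flip: lscale_const lscale_diff)
  then show ?thesis by (rule ev_eq)
qed

lemma ev_X_zero: assumes "ev F a = 0" shows "ev (X F) a = 0"
proof -
  obtain G where "F - [:ev F a:] = SM G [:- a, 1:]" using ev_ex by blast
  then have "X F - [:0:] = SM (X G) [:- a, 1:]" using assms by (simp add: SM_X[symmetric])
  then show ?thesis by (rule ev_eq)
qed

lemma ev_Xpow_zero: "ev F a = 0 \<Longrightarrow> ev ((X^^k) F) a = 0"
  by (induction k) (auto simp: ev_X_zero)


lemma reduce: assumes "G \<noteq> 0"
  shows "\<exists>R. R \<in> V (degree G) \<and> (\<forall>p. ev G p = 0 \<longrightarrow> ev H p = ev R p)"
proof -
  define e where "e = degree G"
  have G: "G \<in> V (Suc e)" "coeff G e \<noteq> 0" using V_deg assms by (auto simp: e_def)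
  have "\<forall>H. H \<in> V N \<longrightarrow> (\<exists>R. R \<in> V e \<and> (\<forall>p. ev G p = 0 \<longrightarrow> ev H p = ev R p))" for N
  proof (induction N)
    case 0
    show ?case
    proof (intro allI impI)
      fix H :: "'a poly" assume "H \<in> V 0"
      then show "\<exists>R. R \<in> V e \<and> (\<forall>p. ev G p = 0 \<longrightarrow> ev H p = ev R p)"
        using V_mono[of H 0 e] by auto
    qed
  next
    case (Suc M)
    show ?case
    proof (intro allI impI)
      fix H :: "'a poly" assume H: "H \<in> V (Suc M)"
      show "\<exists>R. R \<in> V e \<and> (\<forall>p. ev G p = 0 \<longrightarrow> ev H p = ev R p)"
      proof (cases "Suc M \<le> e")
        case True then show ?thesis using V_mono[OF H True] by auto
      next
        case False
        define k where "k = M - e"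
        have Mk: "M = e + k" using False by (simp add: k_def)
        define s where "s = (\<sigma>^^k) (coeff G e)"
        have s: "s \<noteq> 0" using sigpow_nz G by (simp add: s_def)
        define c where "c = coeff H M * inverse s"
        define H' where "H' = H - lscale c ((X^^k) G)"
        have XG: "(X^^k) G \<in> V (Suc M)" "coeff ((X^^k) G) M = s"
          using Xpow_V[OF G(1), of k] by (auto simp: Mk s_def)
        have "coeff H' i = 0" if "i \<ge> M" for i
        proof (cases "i = M")
          case True then show ?thesis using XG s by (simp add: H'_def coeff_lscale c_def mult.assoc)
        next
          case False then have "i \<ge> Suc M" using that by simp
          then show ?thesis using H XG unfolding skew_polys_lt_def
            by (simp add: H'_def coeff_lscale)
        qed
        then have "H' \<in> V M" unfolding skew_polys_lt_def by simp
        with Suc obtain R where R: "R \<in> V e" "\<forall>p. ev G p = 0 \<longrightarrow> ev H' p = ev R p" by blast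
        have "ev H p = ev R p" if g: "ev G p = 0" for p
        proof -
          have "ev ((X^^k) G) p = 0" using ev_Xpow_zero g by blast
          moreover have "ev H' p = ev R p" using R(2) g by blast
          ultimately show ?thesis by (simp add: H'_def ev_diff ev_lscale)
        qed
        then show ?thesis using R(1) by blast
      qed
    qed
  qed
  then show ?thesis using V_deg[of H] by (simp add: e_def)
qed

abbreviation Iv where "Iv \<equiv> vanishing_ideal \<sigma> \<delta>"
abbreviation cl where "cl \<equiv> P_closure \<sigma> \<delta>"
abbreviation rk where "rk \<equiv> P_rank \<sigma> \<delta>"
abbreviation ind where "ind \<equiv> P_independent \<sigma> \<delta>"

lemma Iv_iff: "F \<in> Iv S \<longleftrightarrow> (\<forall>a\<in>S. ev F a = 0)"
  by (simp add: vanishing_ideal_def)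

lemma cl_iff: "a \<in> cl S \<longleftrightarrow> (\<forall>F\<in>Iv S. ev F a = 0)"
  by (simp add: P_closure_def zeros_of_def)

lemma sub_cl: "S \<subseteq> cl S"
  by (auto simp: cl_iff Iv_iff)

lemma Iv_anti: "S \<subseteq> T \<Longrightarrow> Iv T \<subseteq> Iv S"
  by (auto simp: Iv_iff subset_iff)

lemma cl_mono: "S \<subseteq> T \<Longrightarrow> cl S \<subseteq> cl T"
  by (meson Iv_anti cl_iff subset_iff)

lemma Iv_cl: "Iv (cl S) = Iv S"
  using sub_cl[of S] by (auto simp: cl_iff Iv_iff)

lemma rk_le: "G \<in> Iv S \<Longrightarrow> G \<noteq> 0 \<Longrightarrow> rk S \<le> degree G"
  unfolding P_rank_def by (rule Least_le) blast

lemma rk_wit: "G \<in> Iv S \<Longrightarrow> G \<noteq> 0 \<Longrightarrow> \<exists>G'\<in>Iv S. G' \<noteq> 0 \<and> degree G' = rk S"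
  unfolding P_rank_def by (rule LeastI[of _ "degree G"]) blast

lemma exist_van: "finite S \<Longrightarrow> \<exists>G\<in>Iv S. G \<noteq> 0 \<and> degree G \<le> card S"
proof (induction S rule: finite_induct)
  case empty
  have "[:1::'a:] \<in> Iv {}" "[:1::'a:] \<noteq> 0" "degree [:1::'a:] \<le> card {}" by (simp_all add: Iv_iff)
  then show ?case by blast
next
  case (insert t S)
  then obtain G where G: "G \<in> Iv S" "G \<noteq> 0" "degree G \<le> card S" by blast
  show ?case
  proof (cases "ev G t = 0")
    case True then show ?thesis using G insert by (auto simp: Iv_iff)
  next
    case False
    define \<alpha> where "\<alpha> = ev (X G) t * inverse (ev G t)"
    define G' where "G' = X G - lscale \<alpha> G"
    have XG: "X G \<in> V (Suc (Suc (degree G)))" "coeff (X G) (Suc (degree G)) = \<sigma> (lead_coeff G)"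
      using X_V[OF V_deg[of G]] by auto
    have c: "coeff G' (Suc (degree G)) \<noteq> 0"
      using XG G(2) sig_nz by (simp add: G'_def coeff_lscale coeff_eq_0)
    then have nz: "G' \<noteq> 0" by auto
    have "G' \<in> V (Suc (Suc (degree G)))"
      using XG V_deg[of G] unfolding skew_polys_lt_def by (auto simp: G'_def coeff_lscale)
    then have "degree G' \<le> Suc (degree G)" using V_iff by blast
    then have dg: "degree G' \<le> card (insert t S)" using G(3) insert(1,2) by simp
    have "G' \<in> Iv (insert t S)"
      unfolding Iv_iff
    proof
      fix a assume "a \<in> insert t S"
      then show "ev G' a = 0"
      proof
        assume "a = t" then show ?thesis using False by (simp add: G'_def ev_diff ev_lscale \<alpha>_def mult.assoc)
      next
        assume "a \<in> S" then have "ev G a = 0" using G(1) by (simp add: Iv_iff)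
        then show ?thesis by (simp add: G'_def ev_diff ev_lscale ev_X_zero)
      qed
    qed
    then show ?thesis using nz dg by blast
  qed
qed

lemma rk_le_card: "finite S \<Longrightarrow> rk S \<le> card S"
  using exist_van rk_le by fastforce

lemma rk_wit_fin: "finite S \<Longrightarrow> \<exists>G\<in>Iv S. G \<noteq> 0 \<and> degree G = rk S"
  using exist_van rk_wit by blast

lemma rk_increase: assumes "finite S" "t \<notin> cl S" shows "rk S < rk (insert t S)"
proof (rule ccontr)
  assume a: "\<not> rk S < rk (insert t S)"
  obtain G where G: "G \<in> Iv (insert t S)" "G \<noteq> 0" "degree G = rk (insert t S)"
    using rk_wit_fin assms(1) by (meson finite.insertI)
  have "G \<in> Iv S" using G(1) Iv_anti by blast
  then have "rk S \<le> degree G" using G rk_le by blast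
  then have eq: "degree G = rk S" using a G by simp
  obtain H where H: "H \<in> Iv S" "ev H t \<noteq> 0" using assms(2) by (auto simp: cl_iff)
  obtain R where R: "R \<in> V (degree G)" "\<forall>p. ev G p = 0 \<longrightarrow> ev H p = ev R p"
    using reduce[OF G(2)] by blast
  have "R \<in> Iv S" using R(2) H(1) G(1) by (auto simp: Iv_iff)
  have "R = 0"
  proof (rule ccontr)
    assume "R \<noteq> 0"
    then have "coeff R (degree R) \<noteq> 0" by simp
    then have "\<not> degree R \<ge> degree G" using R(1) unfolding skew_polys_lt_def by blast
    then have "degree R < degree G" by simp
    moreover have "rk S \<le> degree R" using \<open>R \<in> Iv S\<close> \<open>R \<noteq> 0\<close> rk_le by blast
    ultimately show False using eq by simp
  qed
  have "ev G t = 0" using G(1) by (simp add: Iv_iff)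
  then have "ev H t = 0" using R(2) \<open>R = 0\<close> by simp
  then show False using H(2) by simp
qed

lemma ind_subset: "ind S \<Longrightarrow> T \<subseteq> S \<Longrightarrow> ind T"
  unfolding P_independent_def using cl_mono
  by (metis Diff_mono subset_iff order_refl)

lemma ind_rk: "finite S \<Longrightarrow> ind S \<Longrightarrow> rk S = card S"
proof (induction S rule: finite_induct)
  case empty then show ?case using rk_le_card[of "{}"] by simp
next
  case (insert t S)
  have "ind S" using insert ind_subset by blast
  then have r: "rk S = card S" using insert by blast
  have "t \<notin> cl S" using insert(2,4) unfolding P_independent_def by auto
  then have "rk S < rk (insert t S)" using rk_increase insert by blast
  moreover have "rk (insert t S) \<le> card (insert t S)" using rk_le_card insert by blast
  ultimately show ?case using r insert by simp
qed

lemma rk_ind: assumes "finite S" "rk S = card S" shows "ind S"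
  unfolding P_independent_def
proof
  fix a assume a: "a \<in> S"
  show "a \<notin> cl (S - {a})"
  proof
    assume "a \<in> cl (S - {a})"
    then have "S \<subseteq> cl (S - {a})" using sub_cl[of "S - {a}"] by auto
    then have sub: "Iv (S - {a}) \<subseteq> Iv S" using Iv_anti[of S "cl (S - {a})"] by (simp add: Iv_cl)
    obtain G where G: "G \<in> Iv (S - {a})" "G \<noteq> 0" "degree G = rk (S - {a})"
      using rk_wit_fin assms(1) by blast
    have "rk S \<le> rk (S - {a})" using G sub rk_le by fastforce
    also have "\<dots> \<le> card (S - {a})" using rk_le_card assms(1) by blast
    also have "\<dots> < card S"
    proof -
      have "card S > 0" using a assms(1) card_gt_0_iff by blast
      then show ?thesis using a assms(1) by simp
    qed
    finally show False using assms(2) by simp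
  qed
qed

lemma exchange: assumes "finite C" "ind C" "t \<notin> cl C" shows "ind (insert t C)"
proof -
  have "t \<notin> C" using assms(3) sub_cl by blast
  have "rk C < rk (insert t C)" using rk_increase assms by blast
  moreover have "rk (insert t C) \<le> card (insert t C)" using rk_le_card assms by blast
  ultimately have "rk (insert t C) = card (insert t C)"
    using ind_rk[OF assms(1,2)] \<open>t \<notin> C\<close> assms(1) by simp
  then show ?thesis using rk_ind assms(1) by blast
qed


lemma main_aux:
  assumes cl\<Omega>: "P_closed \<sigma> \<delta> \<Omega>" and bas: "P_basis \<sigma> \<delta> B \<Omega>" and finB: "finite B"
  shows "rk \<Omega> - rk (zeros_of \<sigma> \<delta> {F} \<inter> \<Omega>) = Min {hamming_eval \<sigma> \<delta> A F | A. P_basis \<sigma> \<delta> A \<Omega>}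
     \<and> rk \<Omega> - rk (zeros_of \<sigma> \<delta> {F} \<inter> \<Omega>) \<le> hamming_eval \<sigma> \<delta> B F"
proof -
  define n where "n = rk \<Omega>"
  have IvB: "Iv \<Omega> = Iv B" using bas Iv_cl[of B] by (simp add: P_basis_def)
  have rkB: "rk \<Omega> = rk B" unfolding P_rank_def IvB ..
  obtain G0 where G0: "G0 \<in> Iv \<Omega>" "G0 \<noteq> 0" "degree G0 = n"
    using rk_wit_fin[OF finB] IvB rkB n_def by auto
  have bound_fin: "card C \<le> n" if "C \<subseteq> \<Omega>" "ind C" "finite C" for C
  proof -
    have "G0 \<in> Iv C" using G0(1) Iv_anti that(1) by blast
    then have "rk C \<le> n" using rk_le[of G0 C] G0(2,3) by simp
    then show ?thesis using ind_rk that by simp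
  qed
  have bound: "finite C \<and> card C \<le> n" if "C \<subseteq> \<Omega>" "ind C" for C
  proof (cases "finite C")
    case True then show ?thesis using bound_fin that by blast
  next
    case False
    obtain C' where C': "finite C'" "card C' = Suc n" "C' \<subseteq> C"
      using infinite_arbitrarily_large[OF False] by blast
    have "card C' \<le> n" using bound_fin[of C'] C' that ind_subset by blast
    then show ?thesis using C' by simp
  qed
  have basis_card: "finite A \<and> card A = n" if "P_basis \<sigma> \<delta> A \<Omega>" for A
  proof -
    have A: "A \<subseteq> \<Omega>" "ind A" "cl A = \<Omega>" using that by (auto simp: P_basis_def)
    then have fA: "finite A" using bound by blast
    have "Iv A = Iv \<Omega>" using A(3) Iv_cl[of A] by simp
    then have "rk A = n" unfolding n_def P_rank_def by simp
    then show ?thesis using ind_rk fA A by simp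
  qed
  define T where "T = zeros_of \<sigma> \<delta> {F} \<inter> \<Omega>"
  define r where "r = rk T"
  have T_iff: "a \<in> T \<longleftrightarrow> a \<in> \<Omega> \<and> ev F a = 0" for a by (auto simp: T_def zeros_of_def)
  have "G0 \<in> Iv T" using G0(1) Iv_anti[of T \<Omega>] T_iff by blast
  then obtain GT where GT: "GT \<in> Iv T" "GT \<noteq> 0" "degree GT = r"
    using rk_wit G0(2) r_def by blast
  have ham: "hamming_eval \<sigma> \<delta> A F = n - card {a\<in>A. ev F a = 0}" if "P_basis \<sigma> \<delta> A \<Omega>" for A
  proof -
    have fA: "finite A" "card A = n" using basis_card that by auto
    have "{a\<in>A. ev F a \<noteq> 0} = A - {a\<in>A. ev F a = 0}" by auto
    then have "card {a\<in>A. ev F a \<noteq> 0} = card A - card {a\<in>A. ev F a = 0}"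
      using fA(1) by (simp add: card_Diff_subset)
    then show ?thesis using fA by (simp add: hamming_eval_def)
  qed
  have lower: "n - r \<le> hamming_eval \<sigma> \<delta> A F" if "P_basis \<sigma> \<delta> A \<Omega>" for A
  proof -
    define A0 where "A0 = {a\<in>A. ev F a = 0}"
    have A: "A \<subseteq> \<Omega>" "ind A" using that by (auto simp: P_basis_def)
    have fA: "finite A" using basis_card that by auto
    have A0T: "A0 \<subseteq> T" using A T_iff by (auto simp: A0_def)
    have iA0: "ind A0" using A ind_subset by (auto simp: A0_def)
    have fA0: "finite A0" using fA by (simp add: A0_def)
    have "GT \<in> Iv A0" using GT(1) Iv_anti[OF A0T] by blast
    then have "rk A0 \<le> r" using rk_le[of GT A0] GT(2,3) by simp
    then have "card A0 \<le> r" using ind_rk[OF fA0 iA0] by simp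
    then show ?thesis using ham[OF that] by (simp add: A0_def)
  qed
  have maxext: "\<exists>C. C0 \<subseteq> C \<and> C \<subseteq> K \<and> ind C \<and> K \<subseteq> cl C"
    if "C0 \<subseteq> K" "K \<subseteq> \<Omega>" "ind C0" for C0 K
  proof -
    let ?P = "\<lambda>C. C0 \<subseteq> C \<and> C \<subseteq> K \<and> ind C"
    have h: "\<forall>y. ?P y \<longrightarrow> card y < Suc n"
    proof (intro allI impI)
      fix y assume "?P y"
      then have "y \<subseteq> \<Omega>" "ind y" using that(2) by auto
      then show "card y < Suc n" using bound[of y] by simp
    qed
    have "?P C0" using that by simp
    from Lattices_Big.ex_has_greatest_nat[OF this h]
    obtain C where C: "?P C" "\<forall>y. ?P y \<longrightarrow> card y \<le> card C" by blast
    have "C \<subseteq> \<Omega>" using C(1) that(2) by blast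
    have fC: "finite C" using bound[of C] C(1) \<open>C \<subseteq> \<Omega>\<close> by blast
    have "K \<subseteq> cl C"
    proof
      fix t assume t: "t \<in> K"
      show "t \<in> cl C"
      proof (rule ccontr)
        assume nt: "t \<notin> cl C"
        then have "t \<notin> C" using sub_cl by blast
        have "ind (insert t C)" using exchange[OF fC _ nt] C(1) by blast
        then have "?P (insert t C)" using C(1) t by blast
        then have "card (insert t C) \<le> card C" using C(2) by blast
        then show False using fC \<open>t \<notin> C\<close> by simp
      qed
    qed
    then show ?thesis using C(1) by blast
  qed
  have ind0: "ind {}" by (simp add: P_independent_def)
  have TO: "T \<subseteq> \<Omega>" by (simp add: T_def)
  obtain C where C: "C \<subseteq> T" "ind C" "T \<subseteq> cl C"
    using maxext[of "{}" T, OF _ TO ind0] by blast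
  have fC: "finite C" using bound[of C] C TO by blast
  have "Iv C \<subseteq> Iv T" using Iv_anti[OF C(3)] Iv_cl[of C] by simp
  moreover obtain GC where GC: "GC \<in> Iv C" "GC \<noteq> 0" "degree GC = rk C" using rk_wit_fin[OF fC] by blast
  ultimately have "r \<le> rk C" using rk_le[of GC T] r_def by auto
  then have "r \<le> card C" using ind_rk[OF fC C(2)] by simp
  obtain A where A: "C \<subseteq> A" "A \<subseteq> \<Omega>" "ind A" "\<Omega> \<subseteq> cl A"
    using maxext[of C \<Omega>, OF _ order_refl C(2)] C(1) TO by blast
  have "cl A \<subseteq> \<Omega>" using cl_mono[OF A(2)] cl\<Omega> by (simp add: P_closed_def)
  then have basA: "P_basis \<sigma> \<delta> A \<Omega>" using A by (auto simp: P_basis_def)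
  have fA: "finite A" using basis_card basA by blast
  have "C \<subseteq> {a\<in>A. ev F a = 0}" using A(1) C(1) T_iff by auto
  then have "card C \<le> card {a\<in>A. ev F a = 0}" using fA by (intro card_mono) auto
  then have hA: "hamming_eval \<sigma> \<delta> A F = n - r"
    using ham[OF basA] lower[OF basA] \<open>r \<le> card C\<close> by simp
  define S where "S = {hamming_eval \<sigma> \<delta> A F | A. P_basis \<sigma> \<delta> A \<Omega>}"
  have "S \<subseteq> {..n}" using ham by (auto simp: S_def)
  then have "finite S" by (rule finite_subset) simp
  moreover have "n - r \<in> S" unfolding S_def using hA basA by (intro CollectI exI[of _ A] conjI) auto
  moreover have "\<And>y. y \<in> S \<Longrightarrow> n - r \<le> y" using lower unfolding S_def by blast
  ultimately have "Min S = n - r" by (intro Min_eqI) auto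
  then show ?thesis using lower[OF bas] unfolding S_def n_def r_def T_def by simp
qed

end

theorem mainTheorem3:
  fixes \<sigma> \<delta> :: "'a::division_ring \<Rightarrow> 'a" and \<Omega> B :: "'a set" and F :: "'a poly" and n :: nat
  assumes "ring_endo \<sigma>" and "sigma_derivation \<sigma> \<delta>"
    and "P_closed \<sigma> \<delta> \<Omega>" and "P_basis \<sigma> \<delta> B \<Omega>" and "finite B"
    and "n = P_rank \<sigma> \<delta> \<Omega>"
    and "F \<in> skew_polys_lt n"
  shows "skew_weight \<sigma> \<delta> \<Omega> F = Min {hamming_eval \<sigma> \<delta> A F | A. P_basis \<sigma> \<delta> A \<Omega>}
     \<and> skew_weight \<sigma> \<delta> \<Omega> F \<le> hamming_eval \<sigma> \<delta> B F"
  unfolding skew_weight_def using main_aux[OF assms(1-5)] by blast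

end
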